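(* Let $\mathcal{M}=\langle S,\to,L\rangle$ be a labeled transition system, let $B\subseteq S\times S$ be a skipping simulation on $\mathcal{M}$, and let $s,u,w\in S$ with $sBw$, $s\to u$, and $\langle s,u\rangle$ a node of $\mathit{ranktCt}(\mathcal{M},s,w)$. Then $\mathit{size}(\mathit{ranktCt}(\mathcal{M},u,w))\prec\mathit{size}(\mathit{ranktCt}(\mathcal{M},s,w))$.
   Context: A labeled transition system is $\mathcal{M}=\langle S,\to,L\rangle$ where $S$ is a non-empty set of states, $\to\subseteq S\times S$ is left-total, and $L$ is a function with domain $S$. A fullpath is an infinite sequence $\sigma$ with $\sigma(i)\to\sigma(i+1)$ for all $i$; it starts at $\sigma(0)$. $w\to^{+}v$ means there is a finite path $w=v_0\to\cdots\to v_k=v$ with $k\ge1$. Let $\mathit{INC}$ be the set of strictly increasing infinite sequences of naturals starting at $0$. For a fullpath $\sigma$ and $\pi\in\mathit{INC}$ the $i$-th segment of $\sigma$ is $\sigma(\pi(i)),\dots,\sigma(\pi(i+1)-1)$. $\mathit{match}(B,\sigma,\delta)$ holds iff there exist $\pi,\xi\in\mathit{INC}$ such that for every $i$ and every state $x$ in the $i$-th segment of $\sigma$ w.r.t. $\pi$, $xB\delta(\xi(i))$. $B$ is a skipping simulation (SKS) iff for all $s,w$ with $sBw$: $L(s)=L(w)$, and for every fullpath $\sigma$ starting at $s$ there is a fullpath $\delta$ starting at $w$ with $\mathit{match}(B,\sigma,\delta)$. The computation tree $\mathit{ctree}(\mathcal{M},s)$ has as nodes finite sequences over $S$; it is the smallest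 tree such that $\langle s\rangle$ is the root, and if $\langle s,\dots,x\rangle$ is a node and $x\to y$ then $\langle s,\dots,x,y\rangle$ is a node whose parent is $\langle s,\dots,x\rangle$. For the SKS $B$: if not $sBw$, $\mathit{ranktCt}(\mathcal{M},s,w)$ is the empty tree; otherwise it is the largest subtree of $\mathit{ctree}(\mathcal{M},s)$ (containing the root) such that every non-root node $\langle s,\dots,x\rangle$ satisfies $xBw$ and, for all $v$ with $w\to^{+}v$, not $xBv$. (Every branch of this tree is finite.) For a tree $t$ all of whose branches are finite, ordinals are assigned to nodes by $\mathit{size}(t,x)=\bigcup_{c\text{ a child of }x}\mathit{size}(t,c)+1$ (von Neumann ordinals), and $\mathit{size}(\mathit{ranktCt}(\mathcal{M},s,w))=\mathit{size}(\mathit{ranktCt}(\mathcal{M},s,w),\langle s\rangle)$. $\prec$ is the strict order on ordinals. *)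

theory Defs
  imports Main
begin

text \<open>A labeled transition system: states are the elements of the type 'a,
  the transition relation is R, the labeling is L. Left-totality is a
  separate assumption.\<close>

definition lts_left_total :: "('a \<Rightarrow> 'a \<Rightarrow> bool) \<Rightarrow> bool" where
  "lts_left_total R \<longleftrightarrow> (\<forall>x. \<exists>y. R x y)"

definition fullpath :: "('a \<Rightarrow> 'a \<Rightarrow> bool) \<Rightarrow> (nat \<Rightarrow> 'a) \<Rightarrow> bool" where
  "fullpath R \<sigma> \<longleftrightarrow> (\<forall>i. R (\<sigma> i) (\<sigma> (Suc i)))"

definition INC :: "(nat \<Rightarrow> nat) set" where
  "INC = {\<pi>. strict_mono \<pi> \<and> \<pi> 0 = 0}"

definition match :: "('a \<Rightarrow> 'a \<Rightarrow> bool) \<Rightarrow> (nat \<Rightarrow> 'a) \<Rightarrow> (nat \<Rightarrow> 'a) \<Rightarrow> bool" where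
  "match B \<sigma> \<delta> \<longleftrightarrow> (\<exists>\<pi>\<in>INC. \<exists>\<xi>\<in>INC. \<forall>i k. \<pi> i \<le> k \<and> k < \<pi> (Suc i) \<longrightarrow> B (\<sigma> k) (\<delta> (\<xi> i)))"

definition SKS :: "('a \<Rightarrow> 'a \<Rightarrow> bool) \<Rightarrow> ('a \<Rightarrow> 'l) \<Rightarrow> ('a \<Rightarrow> 'a \<Rightarrow> bool) \<Rightarrow> bool" where
  "SKS R L B \<longleftrightarrow> (\<forall>s w. B s w \<longrightarrow> L s = L w \<and>
      (\<forall>\<sigma>. fullpath R \<sigma> \<and> \<sigma> 0 = s \<longrightarrow> (\<exists>\<delta>. fullpath R \<delta> \<and> \<delta> 0 = w \<and> match B \<sigma> \<delta>)))"

inductive_set ctree :: "('a \<Rightarrow> 'a \<Rightarrow> bool) \<Rightarrow> 'a \<Rightarrow> 'a list set" for R s where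
  root: "[s] \<in> ctree R s"
| step: "p \<in> ctree R s \<Longrightarrow> R (last p) y \<Longrightarrow> p @ [y] \<in> ctree R s"

definition is_subtree :: "'a list set \<Rightarrow> 'a list set \<Rightarrow> 'a list \<Rightarrow> bool" where
  "is_subtree T t r \<longleftrightarrow> T \<subseteq> t \<and> r \<in> T \<and> (\<forall>x\<in>T. x \<noteq> r \<longrightarrow> butlast x \<in> T)"

definition ranktCt :: "('a \<Rightarrow> 'a \<Rightarrow> bool) \<Rightarrow> ('a \<Rightarrow> 'a \<Rightarrow> bool) \<Rightarrow> 'a \<Rightarrow> 'a \<Rightarrow> 'a list set" where
  "ranktCt R B s w = (if \<not> B s w then {} else
     \<Union>{T. is_subtree T (ctree R s) [s] \<and>
          (\<forall>x\<in>T. x \<noteq> [s] \<longrightarrow> B (last x) w \<and> (\<forall>v. R\<^sup>+\<^sup>+ w v \<longrightarrow> \<not> B (last x) v))})"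

definition child :: "'a list set \<Rightarrow> 'a list \<Rightarrow> 'a list \<Rightarrow> bool" where
  "child t x c \<longleftrightarrow> x \<in> t \<and> c \<in> t \<and> (\<exists>z. c = x @ [z])"

text \<open>Comparison of the ordinals size(t,x) = (UN c child of x. size(t,c)) + 1 for
  trees all of whose branches are finite, unfolded from the recursive definition:
  size(t,x) \<le> size(t',y) iff every child d of x has size(t,d) < size(t',y);
  size(t,x) < size(t',y) iff some child c of y has size(t,x) \<le> size(t',c).
  Least fixpoint; on trees with only finite branches this is exactly the
  ordinal order on von Neumann ranks.\<close>
inductive size_le :: "'a list set \<Rightarrow> 'a list \<Rightarrow> 'a list set \<Rightarrow> 'a list \<Rightarrow> bool"
  and size_less :: "'a list set \<Rightarrow> 'a list \<Rightarrow> 'a list set \<Rightarrow> 'a list \<Rightarrow> bool" where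
  le: "(\<And>d. child t x d \<Longrightarrow> size_less t d t' y) \<Longrightarrow> size_le t x t' y"
| less: "child t' y c \<Longrightarrow> size_le t x t' c \<Longrightarrow> size_less t x t' y"

definition rank_size_less :: "('a \<Rightarrow> 'a \<Rightarrow> bool) \<Rightarrow> ('a \<Rightarrow> 'a \<Rightarrow> bool) \<Rightarrow> 'a \<Rightarrow> 'a \<Rightarrow> 'a \<Rightarrow> 'a \<Rightarrow> bool" where
  "rank_size_less R B u w s w' \<longleftrightarrow> size_less (ranktCt R B u w) [u] (ranktCt R B s w') [s]"

end

theory Submission
  imports Defs
begin

definition goodT :: "('a \<Rightarrow> 'a \<Rightarrow> bool) \<Rightarrow> ('a \<Rightarrow> 'a \<Rightarrow> bool) \<Rightarrow> 'a \<Rightarrow> 'a \<Rightarrow> 'a list set \<Rightarrow> bool" where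
  "goodT R B s w T \<longleftrightarrow> is_subtree T (ctree R s) [s] \<and>
          (\<forall>x\<in>T. x \<noteq> [s] \<longrightarrow> B (last x) w \<and> (\<forall>v. R\<^sup>+\<^sup>+ w v \<longrightarrow> \<not> B (last x) v))"

lemma rank_mem: "B s w \<Longrightarrow> x \<in> ranktCt R B s w \<longleftrightarrow> (\<exists>T. goodT R B s w T \<and> x \<in> T)"
  unfolding ranktCt_def goodT_def by auto

lemma rank_props:
  assumes "B s w" "x \<in> ranktCt R B s w"
  shows "x \<in> ctree R s" "x \<noteq> [s] \<Longrightarrow> butlast x \<in> ranktCt R B s w"
    "x \<noteq> [s] \<Longrightarrow> B (last x) w" "x \<noteq> [s] \<Longrightarrow> R\<^sup>+\<^sup>+ w v \<Longrightarrow> \<not> B (last x) v"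
proof -
  obtain T where T: "goodT R B s w T" "x \<in> T" using assms rank_mem[of B s w x R] by blast
  have sub: "T \<subseteq> ranktCt R B s w" using T(1) rank_mem[of B s w _ R] assms(1) by blast
  show "x \<in> ctree R s" using T unfolding goodT_def is_subtree_def by blast
  show "x \<noteq> [s] \<Longrightarrow> butlast x \<in> ranktCt R B s w" using T sub unfolding goodT_def is_subtree_def by blast
  show "x \<noteq> [s] \<Longrightarrow> B (last x) w" using T unfolding goodT_def by blast
  show "x \<noteq> [s] \<Longrightarrow> R\<^sup>+\<^sup>+ w v \<Longrightarrow> \<not> B (last x) v" using T unfolding goodT_def by blast
qed

lemma rank_root: "B s w \<Longrightarrow> [s] \<in> ranktCt R B s w"
  unfolding rank_mem goodT_def is_subtree_def
  by (rule exI[of _ "{[s]}"]) (auto intro: ctree.root)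

lemma ctree_ne: "p \<in> ctree R s \<Longrightarrow> p \<noteq> []"
  by (induction rule: ctree.induct) auto

lemma ctree_snoc: "p @ [y] \<in> ctree R s \<Longrightarrow> p \<noteq> [] \<Longrightarrow> R (last p) y"
  by (erule ctree.cases) auto

lemma ctree_cons: "p \<in> ctree R u \<Longrightarrow> R s u \<Longrightarrow> s # p \<in> ctree R s"
proof (induction rule: ctree.induct)
  case root
  then show ?case using ctree.step[OF ctree.root, of R s u] by simp
next
  case (step p y)
  then have "s # p \<in> ctree R s" by simp
  from ctree.step[OF this] step ctree_ne[OF step(1)] show ?case by simp
qed

lemma fullpath_trancl: "fullpath R d \<Longrightarrow> 0 < n \<Longrightarrow> R\<^sup>+\<^sup>+ (d 0) (d n)"
proof (induction n)
  case 0 then show ?case by simp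
next
  case (Suc n)
  have r: "R (d n) (d (Suc n))" using Suc(2) unfolding fullpath_def by blast
  show ?case
  proof (cases "n = 0")
    case True then show ?thesis using r by auto
  next
    case False then show ?thesis using Suc r by (meson not_gr_zero tranclp.trancl_into_trancl)
  qed
qed

lemma wf_child:
  assumes sks: "SKS R L B" and Buw: "B u w"
  shows "wf {(c, x). child (ranktCt R B u w) x c}"
proof -
  let ?T = "ranktCt R B u w"
  have "\<not> (\<exists>f. \<forall>i. (f (Suc i), f i) \<in> {(c, x). child ?T x c})"
  proof
    assume "\<exists>f. \<forall>i. (f (Suc i), f i) \<in> {(c, x). child ?T x c}"
    then obtain f where f: "\<forall>i. (f (Suc i), f i) \<in> {(c, x). child ?T x c}" by blast
    then have fi: "\<And>i. f i \<in> ?T" and fs: "\<And>i. \<exists>z. f (Suc i) = f i @ [z]"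
      unfolding child_def by auto
    have len: "length (f i) \<ge> i + 1" for i
    proof (induction i)
      case 0
      have "f 0 \<noteq> []" by (rule ctree_ne[OF rank_props(1)[OF Buw fi]])
      then show ?case by (simp add: Suc_leI)
    next
      case (Suc i) then show ?case using fs[of i] by auto
    qed
    define \<sigma> where "\<sigma> i = last (f (Suc i))" for i
    have nr: "f (Suc i) \<noteq> [u]" for i using len[of "Suc i"] by auto
    have fp: "fullpath R \<sigma>"
      unfolding fullpath_def
    proof
      fix i
      obtain z where z: "f (Suc (Suc i)) = f (Suc i) @ [z]" using fs by blast
      have "R (last (f (Suc i))) z"
        using ctree_snoc[of "f (Suc i)" z R u] z rank_props(1)[OF Buw fi, of "Suc (Suc i)"]
          ctree_ne[OF rank_props(1)[OF Buw fi, of "Suc i"]] by simp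
      then show "R (\<sigma> i) (\<sigma> (Suc i))" unfolding \<sigma>_def using z by simp
    qed
    have B0: "B (\<sigma> 0) w" unfolding \<sigma>_def using rank_props(3)[OF Buw fi nr] .
    obtain \<delta> where d: "fullpath R \<delta>" "\<delta> 0 = w" "match B \<sigma> \<delta>"
      using sks B0 fp unfolding SKS_def by blast
    then obtain \<pi> \<xi> where pi: "\<pi> \<in> INC" "\<xi> \<in> INC"
      and m: "\<forall>i k. \<pi> i \<le> k \<and> k < \<pi> (Suc i) \<longrightarrow> B (\<sigma> k) (\<delta> (\<xi> i))"
      unfolding match_def by blast
    have "\<pi> 1 < \<pi> (Suc 1)" using pi(1) unfolding INC_def strict_mono_def by simp
    then have Bk: "B (\<sigma> (\<pi> 1)) (\<delta> (\<xi> 1))" using m by auto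
    have "\<xi> 0 < \<xi> 1" using pi(2) unfolding INC_def strict_mono_def by blast
    then have "0 < \<xi> 1" using pi(2) unfolding INC_def by simp
    then have "R\<^sup>+\<^sup>+ w (\<delta> (\<xi> 1))" using fullpath_trancl[OF d(1)] d(2) by metis
    then show False using rank_props(4)[OF Buw fi[of "Suc (\<pi> 1)"] nr[of "\<pi> 1"], where v="\<delta> (\<xi> 1)"] Bk unfolding \<sigma>_def by simp
  qed
  then show ?thesis using wf_iff_no_infinite_down_chain by blast
qed

theorem lemma3:
  fixes R :: "'a \<Rightarrow> 'a \<Rightarrow> bool" and L :: "'a \<Rightarrow> 'l" and B :: "'a \<Rightarrow> 'a \<Rightarrow> bool"
  assumes "lts_left_total R"
    and "SKS R L B"
    and "B s w" and "R s u"
    and "[s, u] \<in> ranktCt R B s w"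
  shows "rank_size_less R B u w s w"
proof -
  let ?Ts = "ranktCt R B s w" and ?Tu = "ranktCt R B u w"
  have su_nr: "[s, u] \<noteq> [s]" by simp
  have Buw: "B u w" using rank_props(3)[OF assms(3) assms(5) su_nr] by simp
  have nBu: "\<And>v. R\<^sup>+\<^sup>+ w v \<Longrightarrow> \<not> B u v" using rank_props(4)[OF assms(3) assms(5) su_nr] by simp
  define T where "T = insert [s] ((Cons s) ` ?Tu)"
  have sub: "T \<subseteq> ctree R s"
  proof
    fix x assume "x \<in> T"
    then consider "x = [s]" | p where "p \<in> ?Tu" "x = s # p" unfolding T_def by blast
    then show "x \<in> ctree R s"
    proof cases
      case 1 then show ?thesis using ctree.root by simp
    next
      case 2 then show ?thesis using ctree_cons[OF rank_props(1)[where B=B and s=u and w=w and R=R, OF Buw] assms(4)] by simp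
    qed
  qed
  have props: "butlast x \<in> T \<and> B (last x) w \<and> (\<forall>v. R\<^sup>+\<^sup>+ w v \<longrightarrow> \<not> B (last x) v)"
    if x: "x \<in> T" "x \<noteq> [s]" for x
  proof -
    obtain p where p: "p \<in> ?Tu" "x = s # p" using x unfolding T_def by auto
    have pne: "p \<noteq> []" by (rule ctree_ne[OF rank_props(1)[OF Buw p(1)]])
    show ?thesis
    proof (cases "p = [u]")
      case True then show ?thesis using p Buw nBu unfolding T_def by simp
    next
      case False
      then have "butlast p \<in> ?Tu" using rank_props(2)[OF Buw p(1)] by simp
      then show ?thesis using False p pne rank_props(3,4)[OF Buw p(1)] unfolding T_def by auto
    qed
  qed
  have "goodT R B s w T"
    unfolding goodT_def is_subtree_def using sub props unfolding T_def by blast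
  then have emb: "\<And>p. p \<in> ?Tu \<Longrightarrow> s # p \<in> ?Ts"
    unfolding rank_mem[of B s w, OF assms(3)] T_def by blast
  have main: "p \<in> ?Tu \<longrightarrow> size_le ?Tu p ?Ts (s # p)" for p
  proof (induction p rule: wf_induct[OF wf_child[OF assms(2) Buw]])
    case (1 p)
    show ?case
    proof
      assume pT: "p \<in> ?Tu"
      show "size_le ?Tu p ?Ts (s # p)"
      proof (rule size_le_size_less.le)
        fix d assume cd: "child ?Tu p d"
        then have dT: "d \<in> ?Tu" and "size_le ?Tu d ?Ts (s # d)" using 1 unfolding child_def by auto
        moreover have "child ?Ts (s # p) (s # d)" using cd emb unfolding child_def by auto
        ultimately show "size_less ?Tu d ?Ts (s # p)" by (blast intro: size_le_size_less.less)
      qed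
    qed
  qed
  have "size_le ?Tu [u] ?Ts [s, u]" using main[of "[u]"] rank_root[where B=B and s=u and w=w and R=R, OF Buw] by simp
  moreover have "child ?Ts [s] [s, u]" using assms(5) rank_root[where B=B and s=s and w=w and R=R, OF assms(3)] unfolding child_def by simp
  ultimately show ?thesis unfolding rank_size_less_def by (blast intro: size_le_size_less.less)
qed

end
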